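(* Let $\mathbb X$ be a compact metric space and $L\ge0$. Then $$\mathcal P^{\mathrm{curve}}_L(\mathbb X)=\{\gamma_*\omega:\ \gamma\in\mathrm{Lip}(\mathbb X)\text{ has constant speed and }L(\gamma)\le L,\ \omega\in\mathcal P([0,1])\}.$$
   Context: $\mathcal P(Y)$: Borel probability measures on $Y$; $\gamma_*\omega(B)=\omega(\gamma^{-1}(B))$. A closed curve is a continuous $\gamma\colon[a,b]\to\mathbb X$ with $\gamma(a)=\gamma(b)$; its length is $\ell(\gamma)=\sup\{\sum_{k=1}^n\mathrm{dist}_{\mathbb X}(\gamma(t_k),\gamma(t_{k-1})):a\le t_0\le\dots\le t_n\le b\}$. $\mathcal P^{\mathrm{curve}}_L(\mathbb X)$ is the set of $\nu\in\mathcal P(\mathbb X)$ such that $\mathrm{supp}(\nu)\subset\gamma([a,b])$ for some closed curve $\gamma\colon[a,b]\to\mathbb X$ with $\ell(\gamma)\le L$. $\mathrm{Lip}(\mathbb X)$: Lipschitz $\gamma\colon[0,1]\to\mathbb X$ with $\gamma(0)=\gamma(1)$; $L(\gamma)$ is the optimal Lipschitz constant. The speed is the metric derivative $|\dot\gamma|(t)=\lim_{s\to t}\mathrm{dist}_{\mathbb X}(\gamma(s),\gamma(t))/|s-t|$ (defined a.e.); constant speed means it is a.e. constant. *)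

theory Defs
  imports "HOL-Analysis.Analysis" "HOL-Probability.Probability"
begin

definition prob_measures :: "'a::metric_space set \<Rightarrow> 'a measure set" where
  "prob_measures Y = {\<nu>. prob_space \<nu> \<and> sets \<nu> = sets (restrict_space borel Y) \<and> space \<nu> = Y}"

definition msupp :: "'a::metric_space measure \<Rightarrow> 'a set" where
  "msupp \<nu> = {x \<in> space \<nu>. \<forall>U. open U \<and> x \<in> U \<longrightarrow> emeasure \<nu> (U \<inter> space \<nu>) > 0}"

definition curve_length :: "(real \<Rightarrow> 'a::metric_space) \<Rightarrow> real \<Rightarrow> real \<Rightarrow> ereal" where
  "curve_length \<gamma> a b = (SUP p \<in> {(n, t). a \<le> t 0 \<and> (\<forall>k<n. t k \<le> t (Suc k)) \<and> t n \<le> b}.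
      ereal (\<Sum>k=1..fst p. dist (\<gamma> (snd p k)) (\<gamma> (snd p (k - 1)))))"

definition closed_curve_in :: "'a::metric_space set \<Rightarrow> (real \<Rightarrow> 'a) \<Rightarrow> real \<Rightarrow> real \<Rightarrow> bool" where
  "closed_curve_in X \<gamma> a b \<longleftrightarrow> a \<le> b \<and> continuous_on {a..b} \<gamma> \<and> \<gamma> ` {a..b} \<subseteq> X \<and> \<gamma> a = \<gamma> b"

definition P_curve :: "'a::metric_space set \<Rightarrow> real \<Rightarrow> 'a measure set" where
  "P_curve X L = {\<nu> \<in> prob_measures X. \<exists>\<gamma> a b. closed_curve_in X \<gamma> a b \<and>
       curve_length \<gamma> a b \<le> ereal L \<and> msupp \<nu> \<subseteq> \<gamma> ` {a..b}}"

definition Lip_loops :: "'a::metric_space set \<Rightarrow> (real \<Rightarrow> 'a) set" where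
  "Lip_loops X = {\<gamma>. (\<exists>C. lipschitz_on C {0..1} \<gamma>) \<and> \<gamma> ` {0..1} \<subseteq> X \<and> \<gamma> 0 = \<gamma> 1}"

definition lip_const :: "(real \<Rightarrow> 'a::metric_space) \<Rightarrow> real" where
  "lip_const \<gamma> = Inf {C. lipschitz_on C {0..1} \<gamma>}"

definition constant_speed :: "(real \<Rightarrow> 'a::metric_space) \<Rightarrow> bool" where
  "constant_speed \<gamma> \<longleftrightarrow> (\<exists>c. AE t in lebesgue_on {0..1}.
      ((\<lambda>s. dist (\<gamma> s) (\<gamma> t) / \<bar>s - t\<bar>) \<longlongrightarrow> c) (at t within {0..1}))"

end

theory Submission
  imports Defs
begin


fun cs :: "(real \<Rightarrow> 'a::metric_space) \<Rightarrow> real list \<Rightarrow> real" where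
  "cs g (x#y#xs) = dist (g x) (g y) + cs g (y#xs)"
| "cs g _ = 0"

definition parts :: "real \<Rightarrow> real \<Rightarrow> real list set" where
  "parts a b = {xs. xs \<noteq> [] \<and> sorted xs \<and> set xs \<subseteq> {a..b}}"

lemma cs_nonneg: "cs g xs \<ge> 0"
  by (induction g xs rule: cs.induct) auto

lemma cs_sum: "cs g xs = (\<Sum>k<length xs - 1. dist (g (xs!k)) (g (xs!Suc k)))"
proof (induction g xs rule: cs.induct)
  case (1 g x y xs)
  have "length (x # y # xs) - 1 = Suc (length (y # xs) - 1)" by simp
  then show ?case
    by (simp only: sum.lessThan_Suc_shift cs.simps 1) simp
qed auto

lemma mono_seq_le:
  assumes "\<forall>k<n. t k \<le> t (Suc k)" "i \<le> j" "j \<le> n"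
  shows "(t i :: real) \<le> t j"
  using assms(2,3)
proof (induction j)
  case 0 then show ?case by simp
next
  case (Suc j)
  show ?case
  proof (cases "i \<le> j")
    case True
    then have "t i \<le> t j" using Suc by simp
    also have "t j \<le> t (Suc j)" using assms(1) Suc.prems by simp
    finally show ?thesis .
  next
    case False
    then show ?thesis using Suc.prems by (simp add: le_Suc_eq)
  qed
qed

lemma curve_length_parts:
  "curve_length g a b = (SUP xs\<in>parts a b. ereal (cs g xs))"
proof -
  let ?P = "{(n, t). a \<le> t 0 \<and> (\<forall>k<n. t k \<le> t (Suc k)) \<and> t n \<le> b}"
  let ?F = "\<lambda>p. ereal (\<Sum>k=1..fst p. dist (g (snd p k)) (g (snd p (k - 1))))"
  have "?F ` ?P = (\<lambda>xs. ereal (cs g xs)) ` parts a b"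
  proof (intro equalityI subsetI)
    fix y assume "y \<in> ?F ` ?P"
    then obtain n t where nt: "a \<le> t 0" "\<forall>k<n. t k \<le> t (Suc k)" "t n \<le> b" and y: "y = ?F (n,t)"
      by auto
    define xs where "xs = map t [0..<Suc n]"
    have "xs \<in> parts a b"
      unfolding parts_def xs_def
    proof (intro CollectI conjI)
      show "sorted (map t [0..<Suc n])"
        unfolding sorted_iff_nth_mono using mono_seq_le[OF nt(2)] by (simp del: upt_Suc)
      show "set (map t [0..<Suc n]) \<subseteq> {a..b}"
      proof
        fix x assume "x \<in> set (map t [0..<Suc n])"
        then obtain k where k0: "k < Suc n" "x = t k" by (auto simp del: upt_Suc)
        then have k: "k \<le> n" "x = t k" by auto
        have "t 0 \<le> t k" "t k \<le> t n" using mono_seq_le[OF nt(2)] k by auto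
        then show "x \<in> {a..b}" using nt(1,3) k by auto
      qed
    qed simp
    moreover have "cs g xs = (\<Sum>k=1..n. dist (g (t k)) (g (t (k - 1))))"
    proof -
      have "cs g xs = (\<Sum>k<n. dist (g (t k)) (g (t (Suc k))))"
        unfolding cs_sum xs_def length_map length_upt
        by (intro sum.cong) (simp_all del: upt_Suc)
      also have "\<dots> = (\<Sum>k=1..n. dist (g (t k)) (g (t (k - 1))))"
        by (simp only: One_nat_def sum.atLeast1_atMost_eq) (simp add: dist_commute)
      finally show ?thesis .
    qed
    ultimately show "y \<in> (\<lambda>xs. ereal (cs g xs)) ` parts a b" using y by (intro image_eqI[where x=xs]) auto
  next
    fix y assume "y \<in> (\<lambda>xs. ereal (cs g xs)) ` parts a b"
    then obtain xs where xs: "xs \<in> parts a b" "y = ereal (cs g xs)" by auto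
    define n where "n = length xs - 1"
    define t where "t = (\<lambda>k. xs ! k)"
    have len: "length xs = Suc n" using xs(1) by (auto simp: parts_def n_def)
    have "(n, t) \<in> ?P"
    proof -
      have s: "sorted xs" and ne: "xs \<noteq> []" and sub: "set xs \<subseteq> {a..b}" using xs(1) by (auto simp: parts_def)
      have "xs ! 0 \<in> set xs" "xs ! n \<in> set xs" using len by auto
      then have "a \<le> t 0" "t n \<le> b" using sub unfolding t_def by auto
      moreover have "\<forall>k<n. t k \<le> t (Suc k)" using s len unfolding t_def sorted_iff_nth_mono by simp
      ultimately show ?thesis by simp
    qed
    moreover have "cs g xs = (\<Sum>k=1..n. dist (g (t k)) (g (t (k - 1))))"
    proof -
      have "cs g xs = (\<Sum>k<n. dist (g (t k)) (g (t (Suc k))))"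
        unfolding cs_sum t_def n_def by simp
      also have "\<dots> = (\<Sum>k=1..n. dist (g (t k)) (g (t (k - 1))))"
        by (simp only: One_nat_def sum.atLeast1_atMost_eq) (simp add: dist_commute)
      finally show ?thesis .
    qed
    ultimately show "y \<in> ?F ` ?P" using xs(2) by (intro image_eqI[where x="(n,t)"]) auto
  qed
  then show ?thesis unfolding curve_length_def by (simp add: image_image)
qed


lemma parts_mono: "a \<le> a' \<Longrightarrow> b' \<le> b \<Longrightarrow> parts a' b' \<subseteq> parts a b"
  unfolding parts_def by auto

lemma parts_two: "a \<le> b \<Longrightarrow> [a, b] \<in> parts a b"
  unfolding parts_def by auto

lemma cl_ge: "xs \<in> parts a b \<Longrightarrow> ereal (cs g xs) \<le> curve_length g a b"
  unfolding curve_length_parts by (rule SUP_upper)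

lemma cl_le: "(\<And>xs. xs \<in> parts a b \<Longrightarrow> cs g xs \<le> M) \<Longrightarrow> curve_length g a b \<le> ereal M"
  unfolding curve_length_parts by (rule SUP_least) simp

lemma cl_mono: "a \<le> a' \<Longrightarrow> b' \<le> b \<Longrightarrow> curve_length g a' b' \<le> curve_length g a b"
  unfolding curve_length_parts by (rule SUP_subset_mono[OF parts_mono]) auto

lemma cl_nonneg: "a \<le> b \<Longrightarrow> 0 \<le> curve_length g a b"
proof -
  assume "a \<le> b"
  then have "ereal (cs g [a,b]) \<le> curve_length g a b" by (intro cl_ge parts_two)
  moreover have "0 \<le> cs g [a,b]" by (rule cs_nonneg)
  then have "ereal 0 \<le> ereal (cs g [a,b])" by simp
  ultimately show ?thesis by (metis zero_ereal_def order_trans)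
qed

definition finlen :: "(real \<Rightarrow> 'a::metric_space) \<Rightarrow> real \<Rightarrow> real \<Rightarrow> bool" where
  "finlen g a b \<longleftrightarrow> a \<le> b \<and> curve_length g a b < \<infinity>"

definition Lr :: "(real \<Rightarrow> 'a::metric_space) \<Rightarrow> real \<Rightarrow> real \<Rightarrow> real" where
  "Lr g a b = real_of_ereal (curve_length g a b)"

lemma finlen_sub: "finlen g a b \<Longrightarrow> a \<le> u \<Longrightarrow> u \<le> v \<Longrightarrow> v \<le> b \<Longrightarrow> finlen g u v"
  unfolding finlen_def using cl_mono[of a u v b g] by auto

lemma Lr_eq: "finlen g a b \<Longrightarrow> curve_length g a b = ereal (Lr g a b)"
  unfolding finlen_def Lr_def using cl_nonneg[of a b g]
  by (cases "curve_length g a b") auto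

lemma Lr_nonneg: "finlen g a b \<Longrightarrow> 0 \<le> Lr g a b"
  using Lr_eq[of g a b] cl_nonneg[of a b g] unfolding finlen_def by auto

lemma Lr_ge: "finlen g a b \<Longrightarrow> xs \<in> parts a b \<Longrightarrow> cs g xs \<le> Lr g a b"
  using cl_ge[of xs a b g] Lr_eq[of g a b] by auto

lemma Lr_le: "a \<le> b \<Longrightarrow> (\<And>xs. xs \<in> parts a b \<Longrightarrow> cs g xs \<le> M) \<Longrightarrow> finlen g a b \<and> Lr g a b \<le> M"
proof -
  assume ab: "a \<le> b" and M: "\<And>xs. xs \<in> parts a b \<Longrightarrow> cs g xs \<le> M"
  have le: "curve_length g a b \<le> ereal M" by (rule cl_le[OF M])
  then have fin: "finlen g a b" unfolding finlen_def using ab by (auto simp: le_less_trans)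
  then show ?thesis using le Lr_eq[OF fin] by auto
qed

lemma Lr_approx:
  assumes "finlen g a b" "e > 0"
  shows "\<exists>xs\<in>parts a b. cs g xs > Lr g a b - e"
proof (rule ccontr)
  assume "\<not> ?thesis"
  then have "\<And>xs. xs \<in> parts a b \<Longrightarrow> cs g xs \<le> Lr g a b - e" by (auto simp: not_less)
  then have "Lr g a b \<le> Lr g a b - e" using Lr_le assms(1) unfolding finlen_def by blast
  then show False using assms(2) by simp
qed

lemma cs_append:
  "xs \<noteq> [] \<Longrightarrow> ys \<noteq> [] \<Longrightarrow> cs g (xs @ ys) = cs g xs + dist (g (last xs)) (g (hd ys)) + cs g ys"
proof (induction xs)
  case (Cons x xs)
  show ?case
  proof (cases xs)
    case Nil
    then show ?thesis using Cons.prems by (cases ys) auto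
  next
    case (Cons y zs)
    then show ?thesis using Cons.IH Cons.prems by simp
  qed
qed simp

lemma cs_Cons_ge: "cs g ys \<le> cs g (m # ys)"
  by (cases ys) auto

lemma cs_snoc_ge: "cs g ys \<le> cs g (ys @ [m])"
proof (cases "ys = []")
  case False
  then show ?thesis using cs_append[of ys "[m]" g] by simp
qed simp

lemma cs_split: "cs g (xs @ ys) \<le> cs g (xs @ [m]) + cs g (m # ys)"
proof (cases "xs = []")
  case True
  then show ?thesis using cs_Cons_ge[of g ys m] by simp
next
  case xs: False
  show ?thesis
  proof (cases "ys = []")
    case True
    then show ?thesis using cs_snoc_ge[of g xs m] cs_nonneg[of g "[m]"] by simp
  next
    case ys: False
    have "cs g (xs @ ys) = cs g xs + dist (g (last xs)) (g (hd ys)) + cs g ys"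
      by (rule cs_append[OF xs ys])
    also have "\<dots> \<le> cs g xs + dist (g (last xs)) (g m) + (dist (g m) (g (hd ys)) + cs g ys)"
      using dist_triangle[of "g (last xs)" "g (hd ys)" "g m"] by simp
    also have "cs g xs + dist (g (last xs)) (g m) = cs g (xs @ [m])"
      using cs_append[OF xs, of "[m]" g] by simp
    also have "dist (g m) (g (hd ys)) + cs g ys = cs g (m # ys)"
      using ys by (cases ys) auto
    finally show ?thesis .
  qed
qed

lemma dropWhile_gt:
  "sorted xs \<Longrightarrow> x \<in> set (dropWhile (\<lambda>x. x \<le> (m::real)) xs) \<Longrightarrow> m < x"
proof (induction xs)
  case (Cons y ys)
  show ?case
  proof (cases "y \<le> m")
    case True
    then show ?thesis using Cons by simp
  next
    case False
    then show ?thesis using Cons.prems by auto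
  qed
qed simp

lemma parts_append: "xs \<in> parts a m \<Longrightarrow> ys \<in> parts m c \<Longrightarrow> a \<le> m \<Longrightarrow> m \<le> c \<Longrightarrow> xs @ ys \<in> parts a c"
  unfolding parts_def by (auto simp: sorted_append subset_iff, (meson order_trans)+)

lemma Lr_additive:
  assumes fin: "finlen g a c" and m: "a \<le> m" "m \<le> c"
  shows "Lr g a c = Lr g a m + Lr g m c"
proof -
  have f1: "finlen g a m" and f2: "finlen g m c"
    using finlen_sub[OF fin] m by auto
  have "\<And>ys. ys \<in> parts m c \<Longrightarrow> cs g ys \<le> Lr g a c - Lr g a m"
  proof -
    fix ys assume ys: "ys \<in> parts m c"
    have "\<And>xs. xs \<in> parts a m \<Longrightarrow> cs g xs \<le> Lr g a c - cs g ys"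
    proof -
      fix xs assume xs: "xs \<in> parts a m"
      have "cs g xs + cs g ys \<le> cs g (xs @ ys)"
        using cs_append[of xs ys g] xs ys by (auto simp: parts_def)
      also have "\<dots> \<le> Lr g a c" by (rule Lr_ge[OF fin parts_append[OF xs ys m]])
      finally show "cs g xs \<le> Lr g a c - cs g ys" by simp
    qed
    then have "Lr g a m \<le> Lr g a c - cs g ys" using Lr_le m by blast
    then show "cs g ys \<le> Lr g a c - Lr g a m" by simp
  qed
  then have A: "Lr g m c \<le> Lr g a c - Lr g a m" using Lr_le m by blast
  have "\<And>xs. xs \<in> parts a c \<Longrightarrow> cs g xs \<le> Lr g a m + Lr g m c"
  proof -
    fix xs assume xs: "xs \<in> parts a c"
    let ?t = "takeWhile (\<lambda>x. x \<le> m) xs" and ?d = "dropWhile (\<lambda>x. x \<le> m) xs"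
    have s: "sorted xs" and sub: "set xs \<subseteq> {a..c}" using xs by (auto simp: parts_def)
    have "cs g xs = cs g (?t @ ?d)" by simp
    also have "\<dots> \<le> cs g (?t @ [m]) + cs g (m # ?d)" by (rule cs_split)
    also have "cs g (?t @ [m]) \<le> Lr g a m"
    proof (rule Lr_ge[OF f1])
      have "set ?t \<subseteq> {a..m}" using sub set_takeWhileD[of _ "\<lambda>x. x \<le> m" xs] by fastforce
      moreover have "sorted ?t" using s by (rule sorted_takeWhile)
      ultimately show "?t @ [m] \<in> parts a m" using m unfolding parts_def
        by (auto simp: sorted_append)
    qed
    also have "cs g (m # ?d) \<le> Lr g m c"
    proof (rule Lr_ge[OF f2])
      have "set ?d \<subseteq> set xs" by (metis set_dropWhileD subsetI)
      then have "set ?d \<subseteq> {m..c}" using sub dropWhile_gt[OF s, of _ m] by fastforce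
      moreover have "sorted ?d" using s by (rule sorted_dropWhile)
      ultimately show "m # ?d \<in> parts m c" using m unfolding parts_def by auto
    qed
    finally show "cs g xs \<le> Lr g a m + Lr g m c" by simp
  qed
  then have B: "Lr g a c \<le> Lr g a m + Lr g m c" using Lr_le m by (meson order_trans)
  show ?thesis using A B by simp
qed

lemma Lr_chord: "finlen g a b \<Longrightarrow> dist (g a) (g b) \<le> Lr g a b"
  using Lr_ge[of g a b "[a,b]"] parts_two[of a b] unfolding finlen_def by simp

lemma cs_lipschitz:
  assumes L: "C-lipschitz_on {a..b} g" and xs: "xs \<in> parts a b"
  shows "cs g xs \<le> C * (b - a)"
proof -
  have key: "sorted xs \<Longrightarrow> set xs \<subseteq> {a..b} \<Longrightarrow> xs \<noteq> [] \<Longrightarrow> cs g xs \<le> C * (last xs - hd xs)" for xs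
  proof (induction xs)
    case (Cons x xs)
    show ?case
    proof (cases xs)
      case Nil
      then show ?thesis by simp
    next
      case (Cons y zs)
      have xy: "x \<le> y" using Cons Cons.prems(1) by simp
      have "dist (g x) (g y) \<le> C * dist x y"
        using Cons.prems(2) Cons by (intro lipschitz_onD[OF L]) auto
      also have "dist x y = y - x" using xy by (simp add: dist_real_def)
      finally have d: "dist (g x) (g y) \<le> C * (y - x)" .
      have "cs g (y # zs) \<le> C * (last (y # zs) - hd (y # zs))"
        using Cons.IH Cons.prems Cons by simp
      then show ?thesis using d Cons by (simp add: algebra_simps)
    qed
  qed simp
  have s: "sorted xs" "set xs \<subseteq> {a..b}" "xs \<noteq> []" using xs by (auto simp: parts_def)
  then have "last xs \<in> {a..b}" "hd xs \<in> {a..b}" using last_in_set hd_in_set by blast+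
  then have "C * (last xs - hd xs) \<le> C * (b - a)"
    using lipschitz_on_nonneg[OF L] by (intro mult_left_mono) auto
  then show ?thesis using key[OF s] by simp
qed



lemma Lr_mono_right:
  assumes "finlen g a c" "a \<le> m" "m \<le> c"
  shows "Lr g a m \<le> Lr g a c"
  using Lr_additive[OF assms] Lr_nonneg[OF finlen_sub[OF assms(1) assms(2) assms(3) order_refl]] by simp

lemma Lr_mono_left:
  assumes "finlen g a c" "a \<le> m" "m \<le> c"
  shows "Lr g m c \<le> Lr g a c"
  using Lr_additive[OF assms] Lr_nonneg[OF finlen_sub[OF assms(1) order_refl assms(2)]] assms by simp

lemma cs_const: "set ys \<subseteq> {p} \<Longrightarrow> cs g ys = 0"
proof (induction ys)
  case (Cons y ys)
  then show ?case by (cases ys) auto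
qed simp

lemma cs_const_snoc: "set ys \<subseteq> {p} \<Longrightarrow> cs g (ys @ [c]) \<le> dist (g p) (g c)"
proof (cases "ys = []")
  case False
  assume "set ys \<subseteq> {p}"
  moreover have "last ys \<in> set ys" using False by simp
  ultimately show ?thesis using cs_append[OF False, of "[c]" g] cs_const[of ys p g] by auto
qed simp

lemma cs_const_cons: "set ys \<subseteq> {p} \<Longrightarrow> cs g (c # ys) \<le> dist (g c) (g p)"
proof (cases ys)
  case (Cons y zs)
  assume "set ys \<subseteq> {p}"
  then show ?thesis using Cons cs_const[of "y # zs" p g] by auto
qed simp

lemma finite_pos_bound:
  fixes A :: "real set"
  assumes "finite A" "\<And>x. x \<in> A \<Longrightarrow> x > 0" "r > 0"
  shows "\<exists>h>0. h < r \<and> (\<forall>x\<in>A. h < x)"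
proof -
  define m where "m = Min (insert r A)"
  have "m > 0" unfolding m_def using assms by (subst Min_gr_iff) auto
  moreover have "m \<le> r" "\<forall>x\<in>A. m \<le> x" unfolding m_def using assms by auto
  ultimately show ?thesis by (intro exI[of _ "m/2"]) auto
qed

lemma Lr_right_small:
  assumes g: "continuous_on {a..b} g" and fin: "finlen g a b" and t0: "a \<le> t0" "t0 < b" and d: "\<delta> > 0"
  shows "\<exists>h>0. t0 + h \<le> b \<and> Lr g t0 (t0 + h) < \<delta>"
proof -
  have f0: "finlen g t0 b" using finlen_sub[OF fin] t0 by auto
  obtain xs where xs: "xs \<in> parts t0 b" "cs g xs > Lr g t0 b - \<delta>/2"
    using Lr_approx[OF f0, of "\<delta>/2"] d by auto
  obtain \<rho> where \<rho>: "\<rho> > 0" "\<And>t. t \<in> {a..b} \<Longrightarrow> dist t t0 < \<rho> \<Longrightarrow> dist (g t) (g t0) < \<delta>/2"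
    using g t0 d unfolding continuous_on_iff by (metis atLeastAtMost_iff half_gt_zero less_imp_le)
  have "\<exists>h>0. h < min \<rho> (b - t0) \<and> (\<forall>x\<in>(\<lambda>x. x - t0) ` {x\<in>set xs. x > t0}. h < x)"
    by (rule finite_pos_bound) (use \<rho> t0 in auto)
  then obtain h where h: "h > 0" "h < min \<rho> (b - t0)" "\<forall>x\<in>(\<lambda>x. x - t0) ` {x\<in>set xs. x > t0}. h < x"
    by blast
  let ?c = "t0 + h"
  let ?t = "takeWhile (\<lambda>x. x \<le> ?c) xs" and ?d = "dropWhile (\<lambda>x. x \<le> ?c) xs"
  have s: "sorted xs" and sub: "set xs \<subseteq> {t0..b}" using xs by (auto simp: parts_def)
  have ts: "set ?t \<subseteq> {t0}"
  proof
    fix x assume "x \<in> set ?t"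
    then have "x \<in> set xs" "x \<le> ?c" using set_takeWhileD by fastforce+
    then show "x \<in> {t0}" using h(3) sub by force
  qed
  have "cs g xs = cs g (?t @ ?d)" by simp
  also have "\<dots> \<le> cs g (?t @ [?c]) + cs g (?c # ?d)" by (rule cs_split)
  also have "cs g (?t @ [?c]) \<le> dist (g t0) (g ?c)" by (rule cs_const_snoc[OF ts])
  also have "cs g (?c # ?d) \<le> Lr g ?c b"
  proof (rule Lr_ge)
    show "finlen g ?c b" using finlen_sub[OF fin] t0 h by auto
    have "set ?d \<subseteq> set xs" by (metis set_dropWhileD subsetI)
    then have "set ?d \<subseteq> {?c..b}" using sub dropWhile_gt[OF s, of _ ?c] by fastforce
    moreover have "sorted ?d" using s by (rule sorted_dropWhile)
    ultimately show "?c # ?d \<in> parts ?c b" using h unfolding parts_def by auto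
  qed
  finally have 1: "cs g xs \<le> dist (g t0) (g ?c) + Lr g ?c b" by simp
  have "dist (g ?c) (g t0) < \<delta>/2" using h t0 by (intro \<rho>(2)) (auto simp: dist_real_def)
  then have 2: "dist (g t0) (g ?c) < \<delta>/2" by (simp add: dist_commute)
  have 3: "Lr g t0 b = Lr g t0 ?c + Lr g ?c b" using Lr_additive[OF f0] h by auto
  show ?thesis using 1 2 3 xs(2) h by (intro exI[of _ h]) auto
qed

lemma Lr_left_small:
  assumes g: "continuous_on {a..b} g" and fin: "finlen g a b" and t0: "a < t0" "t0 \<le> b" and d: "\<delta> > 0"
  shows "\<exists>h>0. a \<le> t0 - h \<and> Lr g (t0 - h) t0 < \<delta>"
proof -
  have f0: "finlen g a t0" using finlen_sub[OF fin] t0 by auto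
  obtain xs where xs: "xs \<in> parts a t0" "cs g xs > Lr g a t0 - \<delta>/2"
    using Lr_approx[OF f0, of "\<delta>/2"] d by auto
  obtain \<rho> where \<rho>: "\<rho> > 0" "\<And>t. t \<in> {a..b} \<Longrightarrow> dist t t0 < \<rho> \<Longrightarrow> dist (g t) (g t0) < \<delta>/2"
    using g t0 d unfolding continuous_on_iff by (metis atLeastAtMost_iff half_gt_zero less_imp_le)
  have "\<exists>h>0. h < min \<rho> (t0 - a) \<and> (\<forall>x\<in>(\<lambda>x. t0 - x) ` {x\<in>set xs. x < t0}. h < x)"
    by (rule finite_pos_bound) (use \<rho> t0 in auto)
  then obtain h where h: "h > 0" "h < min \<rho> (t0 - a)" "\<forall>x\<in>(\<lambda>x. t0 - x) ` {x\<in>set xs. x < t0}. h < x"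
    by blast
  let ?c = "t0 - h"
  let ?t = "takeWhile (\<lambda>x. x \<le> ?c) xs" and ?d = "dropWhile (\<lambda>x. x \<le> ?c) xs"
  have s: "sorted xs" and sub: "set xs \<subseteq> {a..t0}" using xs by (auto simp: parts_def)
  have ds: "set ?d \<subseteq> {t0}"
  proof
    fix x assume x: "x \<in> set ?d"
    then have "x \<in> set xs" by (metis set_dropWhileD)
    moreover have "?c < x" using dropWhile_gt[OF s x] .
    ultimately show "x \<in> {t0}" using h(3) sub by force
  qed
  have "cs g xs = cs g (?t @ ?d)" by simp
  also have "\<dots> \<le> cs g (?t @ [?c]) + cs g (?c # ?d)" by (rule cs_split)
  also have "cs g (?c # ?d) \<le> dist (g ?c) (g t0)" by (rule cs_const_cons[OF ds])
  also have "cs g (?t @ [?c]) \<le> Lr g a ?c"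
  proof (rule Lr_ge)
    show "finlen g a ?c" using finlen_sub[OF fin] t0 h by auto
    have "set ?t \<subseteq> {a..?c}" using sub set_takeWhileD[of _ "\<lambda>x. x \<le> ?c" xs] by fastforce
    moreover have "sorted ?t" using s by (rule sorted_takeWhile)
    ultimately show "?t @ [?c] \<in> parts a ?c" using h unfolding parts_def
      by (auto simp: sorted_append)
  qed
  finally have 1: "cs g xs \<le> Lr g a ?c + dist (g ?c) (g t0)" by simp
  have 2: "dist (g ?c) (g t0) < \<delta>/2" using h t0 by (intro \<rho>(2)) (auto simp: dist_real_def)
  have 3: "Lr g a t0 = Lr g a ?c + Lr g ?c t0" using Lr_additive[OF f0] h by auto
  show ?thesis using 1 2 3 xs(2) h by (intro exI[of _ h]) auto
qed


lemma arc_diff: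
  assumes fin: "finlen g a b" "a \<le> t" "t \<le> t'" "t' \<le> b"
  shows "Lr g a t' - Lr g a t = Lr g t t'"
  using Lr_additive[OF finlen_sub[OF fin(1) order_refl _ fin(4)], of t] fin by auto

lemma arc_mono:
  assumes fin: "finlen g a b" "a \<le> t" "t \<le> t'" "t' \<le> b"
  shows "Lr g a t \<le> Lr g a t'"
  using arc_diff[OF assms] Lr_nonneg[OF finlen_sub[OF fin(1)]] fin by force

lemma arc_dist:
  assumes fin: "finlen g a b" "a \<le> t" "t \<le> t'" "t' \<le> b"
  shows "dist (g t) (g t') \<le> Lr g a t' - Lr g a t"
  using arc_diff[OF assms] Lr_chord[OF finlen_sub[OF fin(1)]] fin by force

lemma arc_right:
  assumes g: "continuous_on {a..b} g" and fin: "finlen g a b" and t0: "a \<le> t0" "t0 \<le> b" and e: "e > 0"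
  shows "\<exists>h>0. \<forall>t. t0 \<le> t \<and> t \<le> b \<and> t < t0 + h \<longrightarrow> Lr g a t - Lr g a t0 < e"
proof (cases "t0 < b")
  case True
  obtain h where h: "h > 0" "t0 + h \<le> b" "Lr g t0 (t0 + h) < e"
    using Lr_right_small[OF g fin t0(1) True e] by blast
  have "Lr g a t - Lr g a t0 < e" if t: "t0 \<le> t" "t \<le> b" "t < t0 + h" for t
  proof -
    have "Lr g a t - Lr g a t0 = Lr g t0 t" using arc_diff[OF fin t0(1) t(1,2)] .
    also have "\<dots> \<le> Lr g t0 (t0 + h)"
      using Lr_mono_right[OF finlen_sub[OF fin t0(1) _ h(2)], of t] t h by auto
    finally show ?thesis using h(3) by simp
  qed
  then show ?thesis using h(1) by blast
next
  case False
  then show ?thesis using e t0 by (intro exI[of _ 1]) auto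
qed

lemma arc_left:
  assumes g: "continuous_on {a..b} g" and fin: "finlen g a b" and t0: "a \<le> t0" "t0 \<le> b" and e: "e > 0"
  shows "\<exists>h>0. \<forall>t. a \<le> t \<and> t \<le> t0 \<and> t0 - h < t \<longrightarrow> Lr g a t0 - Lr g a t < e"
proof (cases "a < t0")
  case True
  obtain h where h: "h > 0" "a \<le> t0 - h" "Lr g (t0 - h) t0 < e"
    using Lr_left_small[OF g fin True t0(2) e] by blast
  have "Lr g a t0 - Lr g a t < e" if t: "a \<le> t" "t \<le> t0" "t0 - h < t" for t
  proof -
    have "Lr g a t0 - Lr g a t = Lr g t t0" using arc_diff[OF fin t(1,2) t0(2)] .
    also have "\<dots> \<le> Lr g (t0 - h) t0"
      using Lr_mono_left[OF finlen_sub[OF fin h(2) _ t0(2)], of t] t h by auto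
    finally show ?thesis using h(3) by simp
  qed
  then show ?thesis using h(1) by blast
next
  case False
  then show ?thesis using e t0 by (intro exI[of _ 1]) auto
qed

lemma arc_cont:
  assumes g: "continuous_on {a..b} g" and fin: "finlen g a b"
  shows "continuous_on {a..b} (\<lambda>t. Lr g a t)"
  unfolding continuous_on_iff
proof (intro ballI allI impI)
  fix t0 e :: real assume t0: "t0 \<in> {a..b}" and e: "e > 0"
  obtain h1 where h1: "h1 > 0" "\<forall>t. t0 \<le> t \<and> t \<le> b \<and> t < t0 + h1 \<longrightarrow> Lr g a t - Lr g a t0 < e"
    using arc_right[OF g fin _ _ e] t0 by auto
  obtain h2 where h2: "h2 > 0" "\<forall>t. a \<le> t \<and> t \<le> t0 \<and> t0 - h2 < t \<longrightarrow> Lr g a t0 - Lr g a t < e"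
    using arc_left[OF g fin _ _ e] t0 by auto
  show "\<exists>d>0. \<forall>t\<in>{a..b}. dist t t0 < d \<longrightarrow> dist (Lr g a t) (Lr g a t0) < e"
  proof (intro exI[of _ "min h1 h2"] conjI ballI impI)
    fix t assume t: "t \<in> {a..b}" "dist t t0 < min h1 h2"
    show "dist (Lr g a t) (Lr g a t0) < e"
    proof (cases "t0 \<le> t")
      case True
      then have "Lr g a t - Lr g a t0 < e" using h1 t by (auto simp: dist_real_def)
      moreover have "Lr g a t0 \<le> Lr g a t" using arc_mono[OF fin _ True] t t0 by auto
      ultimately show ?thesis by (simp add: dist_real_def)
    next
      case False
      then have "Lr g a t0 - Lr g a t < e" using h2 t by (auto simp: dist_real_def)
      moreover have "Lr g a t \<le> Lr g a t0" using arc_mono[OF fin _ _] t t0 False by auto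
      ultimately show ?thesis by (simp add: dist_real_def)
    qed
  qed (use h1 h2 in auto)
qed


lemma Lr_refl: "Lr g a a = 0"
proof -
  have "finlen g a a \<and> Lr g a a \<le> 0"
  proof (rule Lr_le)
    fix xs assume "xs \<in> parts a a"
    then have "set xs \<subseteq> {a}" unfolding parts_def by auto
    then show "cs g xs \<le> 0" using cs_const[of xs a g] by simp
  qed simp
  then show ?thesis using Lr_nonneg by (meson antisym)
qed

lemma cs_map: "(\<And>x. x \<in> set ys \<Longrightarrow> \<sigma> (f x) = g x) \<Longrightarrow> cs \<sigma> (map f ys) = cs g ys"
proof (induction ys)
  case (Cons y ys)
  then show ?case by (cases ys) auto
qed simp

definition reparam :: "(real \<Rightarrow> 'a::metric_space) \<Rightarrow> real \<Rightarrow> real \<Rightarrow> real \<Rightarrow> 'a" where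
  "reparam g a b u = g (SOME t. t \<in> {a..b} \<and> Lr g a t = Lr g a b * u)"

lemma reparam_props:
  assumes g: "continuous_on {a..b} g" and fin: "finlen g a b" and pos: "Lr g a b > 0"
  defines "\<sigma> \<equiv> reparam g a b" and "lL \<equiv> Lr g a b"
  shows "\<And>t. t \<in> {a..b} \<Longrightarrow> \<sigma> (Lr g a t / lL) = g t"
    and "\<And>t. t \<in> {a..b} \<Longrightarrow> Lr g a t / lL \<in> {0..1}"
    and "\<And>u. u \<in> {0..1} \<Longrightarrow> \<exists>t\<in>{a..b}. \<sigma> u = g t \<and> Lr g a t = lL * u"
    and "\<And>u v. u \<in> {0..1} \<Longrightarrow> v \<in> {0..1} \<Longrightarrow> dist (\<sigma> u) (\<sigma> v) \<le> lL * dist u v"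
    and "\<sigma> ` {0..1} = g ` {a..b}"
    and "\<sigma> 0 = g a" "\<sigma> 1 = g b"
    and "\<And>\<eta>. \<eta> > 0 \<Longrightarrow> \<exists>us\<in>parts 0 1. hd us = 0 \<and> last us = 1 \<and> cs \<sigma> us > lL - \<eta>"
proof -
  have ab: "a \<le> b" using fin unfolding finlen_def by simp
  have sc: "continuous_on {a..b} (\<lambda>t. Lr g a t)" by (rule arc_cont[OF g fin])
  have sa: "Lr g a a = 0" by (rule Lr_refl)
  have ex: "\<exists>t\<in>{a..b}. Lr g a t = lL * u" if u: "u \<in> {0..1}" for u
  proof -
    have "Lr g a a \<le> lL * u" "lL * u \<le> Lr g a b" using u pos sa unfolding lL_def
      by (auto simp: mult_le_cancel_left1)
    then show ?thesis using IVT'[of "\<lambda>t. Lr g a t" a "lL * u" b, OF _ _ ab sc] by auto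
  qed
  have same: "g t = g t'" if "t \<in> {a..b}" "t' \<in> {a..b}" "Lr g a t = Lr g a t'" for t t'
  proof (cases "t \<le> t'")
    case True
    then show ?thesis using arc_dist[OF fin, of t t'] that by auto
  next
    case False
    then show ?thesis using arc_dist[OF fin, of t' t] that by auto
  qed
  have P3: "\<exists>t\<in>{a..b}. \<sigma> u = g t \<and> Lr g a t = lL * u" if u: "u \<in> {0..1}" for u
  proof -
    have "(SOME t. t \<in> {a..b} \<and> Lr g a t = lL * u) \<in> {a..b} \<and> Lr g a (SOME t. t \<in> {a..b} \<and> Lr g a t = lL * u) = lL * u"
      using someI_ex[OF ex[OF u, unfolded Bex_def]] .
    then show ?thesis unfolding \<sigma>_def reparam_def lL_def by blast
  qed
  then show "\<And>u. u \<in> {0..1} \<Longrightarrow> \<exists>t\<in>{a..b}. \<sigma> u = g t \<and> Lr g a t = lL * u" .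
  have P2: "Lr g a t / lL \<in> {0..1}" if t: "t \<in> {a..b}" for t
    using arc_mono[OF fin, of a t] arc_mono[OF fin, of t b] t pos sa unfolding lL_def by auto
  then show "\<And>t. t \<in> {a..b} \<Longrightarrow> Lr g a t / lL \<in> {0..1}" .
  have P1: "\<sigma> (Lr g a t / lL) = g t" if t: "t \<in> {a..b}" for t
  proof -
    obtain t' where t': "t' \<in> {a..b}" "\<sigma> (Lr g a t / lL) = g t'" "Lr g a t' = lL * (Lr g a t / lL)"
      using P3[OF P2[OF t]] by blast
    have "Lr g a t' = Lr g a t" using t'(3) pos unfolding lL_def by simp
    then show ?thesis using same[OF t'(1) t] t'(2) by simp
  qed
  then show "\<And>t. t \<in> {a..b} \<Longrightarrow> \<sigma> (Lr g a t / lL) = g t" .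
  show "dist (\<sigma> u) (\<sigma> v) \<le> lL * dist u v" if uv: "u \<in> {0..1}" "v \<in> {0..1}" for u v
  proof -
    obtain t where t: "t \<in> {a..b}" "\<sigma> u = g t" "Lr g a t = lL * u" using P3[OF uv(1)] by blast
    obtain t' where t': "t' \<in> {a..b}" "\<sigma> v = g t'" "Lr g a t' = lL * v" using P3[OF uv(2)] by blast
    have "dist (g t) (g t') \<le> \<bar>Lr g a t - Lr g a t'\<bar>"
    proof (cases "t \<le> t'")
      case True
      then show ?thesis using arc_dist[OF fin, of t t'] t t' by auto
    next
      case False
      then show ?thesis using arc_dist[OF fin, of t' t] t t' by (auto simp: dist_commute)
    qed
    also have "\<dots> = lL * dist u v" using t t' pos unfolding lL_def
      by (simp add: dist_real_def abs_mult flip: right_diff_distrib)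
    finally show ?thesis using t t' by simp
  qed
  show "\<sigma> ` {0..1} = g ` {a..b}"
  proof
    show "\<sigma> ` {0..1} \<subseteq> g ` {a..b}" using P3 by blast
    show "g ` {a..b} \<subseteq> \<sigma> ` {0..1}"
    proof
      fix x assume "x \<in> g ` {a..b}"
      then obtain t where "t \<in> {a..b}" "x = g t" by blast
      then show "x \<in> \<sigma> ` {0..1}" using P1 P2 by (metis image_eqI)
    qed
  qed
  show "\<sigma> 0 = g a" using P1[of a] ab sa by simp
  show "\<sigma> 1 = g b" using P1[of b] ab pos unfolding lL_def by simp
  show "\<exists>us\<in>parts 0 1. hd us = 0 \<and> last us = 1 \<and> cs \<sigma> us > lL - \<eta>" if eta: "\<eta> > 0" for \<eta>
  proof -
    obtain xs where xs: "xs \<in> parts a b" "cs g xs > lL - \<eta>"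
      using Lr_approx[OF fin eta] unfolding lL_def by blast
    define ys where "ys = a # xs @ [b]"
    have "cs g xs \<le> cs g ys" unfolding ys_def
      using cs_Cons_ge[of g "xs @ [b]" a] cs_snoc_ge[of g xs b] by simp
    have ys: "ys \<in> parts a b" using xs(1) ab unfolding ys_def parts_def
      by (auto simp: sorted_append)
    define us where "us = map (\<lambda>t. Lr g a t / lL) ys"
    have "us \<in> parts 0 1"
    proof -
      have sy: "sorted ys" and sy2: "set ys \<subseteq> {a..b}" using ys unfolding parts_def by auto
      have "sorted_wrt (\<lambda>x y. Lr g a x / lL \<le> Lr g a y / lL) ys"
      proof (rule sorted_wrt_mono_rel[of _ "(\<le>)"])
        fix x y assume "x \<in> set ys" "y \<in> set ys" "x \<le> y"
        then have "Lr g a x \<le> Lr g a y" using sy2 by (intro arc_mono[OF fin]) auto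
        then show "Lr g a x / lL \<le> Lr g a y / lL" using pos unfolding lL_def by (simp add: divide_right_mono)
      qed (use sy in simp)
      then have "sorted us" unfolding us_def sorted_map .
      moreover have "set us \<subseteq> {0..1}" using ys P2 unfolding us_def parts_def by auto
      ultimately show ?thesis unfolding parts_def us_def ys_def by auto
    qed
    moreover have "hd us = 0" unfolding us_def ys_def using sa by simp
    moreover have "last us = 1" unfolding us_def ys_def using pos unfolding lL_def by simp
    moreover have "cs \<sigma> us = cs g ys" unfolding us_def
      by (rule cs_map) (use ys P1 in \<open>auto simp: parts_def\<close>)
    ultimately show ?thesis using \<open>cs g xs \<le> cs g ys\<close> xs(2) by (intro bexI[of _ us]) auto
  qed
qed



lemma disjoint_incr_sum:
  fixes \<phi> :: "real \<Rightarrow> real" and F :: "(real \<times> real) set"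
  assumes fin: "finite F"
    and mono: "\<And>x y. p \<le> x \<Longrightarrow> x \<le> y \<Longrightarrow> y \<le> qmax \<Longrightarrow> \<phi> x \<le> \<phi> y"
    and disj: "\<And>c c'. c \<in> F \<Longrightarrow> c' \<in> F \<Longrightarrow> c \<noteq> c' \<Longrightarrow> {fst c..snd c} \<inter> {fst c'..snd c'} = {}"
  shows "\<forall>q. p \<le> q \<longrightarrow> q \<le> qmax \<longrightarrow> (\<forall>c\<in>F. p \<le> fst c \<and> fst c \<le> snd c \<and> snd c \<le> q)
           \<longrightarrow> (\<Sum>c\<in>F. \<phi> (snd c) - \<phi> (fst c)) \<le> \<phi> q - \<phi> p"
  using fin disj
proof (induction F rule: finite_remove_induct)
  case empty
  then show ?case using mono by auto
next
  case (remove A)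
  show ?case
  proof (intro allI impI)
    fix q assume q: "p \<le> q" "q \<le> qmax" and c: "\<forall>c\<in>A. p \<le> fst c \<and> fst c \<le> snd c \<and> snd c \<le> q"
    have "Max (fst ` A) \<in> fst ` A" using remove.hyps by (intro Max_in) auto
    then obtain c0 where c0: "c0 \<in> A" "fst c0 = Max (fst ` A)" by (metis imageE)
    have le: "fst c \<le> fst c0" if "c \<in> A" for c using c0 remove.hyps that by simp
    have lt: "snd c < fst c0" if "c \<in> A - {c0}" for c
    proof (rule ccontr)
      assume "\<not> snd c < fst c0"
      then have "fst c0 \<in> {fst c..snd c} \<inter> {fst c0..snd c0}" using le that c c0 by auto
      then show False using remove.prems[of c c0] that c0 by auto
    qed
    have IH: "(\<Sum>c\<in>A - {c0}. \<phi> (snd c) - \<phi> (fst c)) \<le> \<phi> (fst c0) - \<phi> p"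
      using remove.IH[OF c0(1)] remove.prems c c0 lt q
      by (smt (verit, best) Diff_iff)
    have "(\<Sum>c\<in>A. \<phi> (snd c) - \<phi> (fst c)) = (\<phi> (snd c0) - \<phi> (fst c0)) + (\<Sum>c\<in>A - {c0}. \<phi> (snd c) - \<phi> (fst c))"
      using remove.hyps c0 by (simp add: sum.remove)
    also have "\<dots> \<le> \<phi> (snd c0) - \<phi> p" using IH by simp
    also have "\<phi> (snd c0) \<le> \<phi> q" using c c0 q by (intro mono) auto
    finally show "(\<Sum>c\<in>A. \<phi> (snd c) - \<phi> (fst c)) \<le> \<phi> q - \<phi> p" by simp
  qed
qed


lemma measure_cball_real: "r \<ge> 0 \<Longrightarrow> measure lebesgue (cball (x::real) r) = 2 * r"
  by (simp add: cball_eq_atLeastAtMost)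

lemma cover_incr:
  fixes \<phi> :: "real \<Rightarrow> real"
  assumes mono: "\<And>x y. p \<le> x \<Longrightarrow> x \<le> y \<Longrightarrow> y \<le> q \<Longrightarrow> \<phi> x \<le> \<phi> y"
    and eps: "\<epsilon> > 0" and pq: "p \<le> q"
    and S: "\<And>t. t \<in> S \<Longrightarrow> \<exists>l r. p \<le> l \<and> l < r \<and> r \<le> q \<and> l \<le> t \<and> t \<le> r \<and> \<epsilon> * (r - l) < \<phi> r - \<phi> l"
  shows "\<exists>T. S \<subseteq> T \<and> T \<in> lmeasurable \<and> measure lebesgue T \<le> 5 * (\<phi> q - \<phi> p) / \<epsilon>"
proof -
  define K where "K = {c. p \<le> fst c \<and> fst c < snd c \<and> snd c \<le> q \<and> \<epsilon> * (snd c - fst c) < \<phi> (snd c) - \<phi> (fst c)}"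
  define ctr where "ctr c = (fst c + snd c) / 2" for c :: "real \<times> real"
  define rad where "rad c = (snd c - fst c) / 2" for c :: "real \<times> real"
  have cb: "cball (ctr c) (rad c) = {fst c..snd c}" for c
    unfolding ctr_def rad_def by (simp add: atLeastAtMost_eq_cball)
  have SK: "S \<subseteq> (\<Union>c\<in>K. cball (ctr c) (rad c))"
  proof
    fix t assume "t \<in> S"
    then obtain l r where "p \<le> l \<and> l < r \<and> r \<le> q \<and> l \<le> t \<and> t \<le> r \<and> \<epsilon> * (r - l) < \<phi> r - \<phi> l"
      using S by blast
    then show "t \<in> (\<Union>c\<in>K. cball (ctr c) (rad c))"
      unfolding cb K_def by (intro UN_I[of "(l, r)"]) auto
  qed
  have rK: "0 < rad c \<and> rad c \<le> q - p" if "c \<in> K" for c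
    using that unfolding K_def rad_def by auto
  obtain C where C: "countable C" "C \<subseteq> K"
      "pairwise (\<lambda>i j. disjnt (cball (ctr i) (rad i)) (cball (ctr j) (rad j))) C"
      "S \<subseteq> (\<Union>i\<in>C. cball (ctr i) (5 * rad i))"
    using Vitali_covering_lemma_cballs[OF SK rK] by blast
  define T where "T = \<Union> ((\<lambda>c. cball (ctr c) (5 * rad c)) ` C)"
  have bound: "measure lebesgue (\<Union>\<E>) \<le> 5 * (\<phi> q - \<phi> p) / \<epsilon>"
    if E: "\<E> \<subseteq> (\<lambda>c. cball (ctr c) (5 * rad c)) ` C" "finite \<E>" for \<E>
  proof -
    obtain F where F: "F \<subseteq> C" "finite F" "\<E> = (\<lambda>c. cball (ctr c) (5 * rad c)) ` F"
      using finite_subset_image[OF E(2,1)] by blast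
    have FK: "c \<in> K" if "c \<in> F" for c using F C that by blast
    have "measure lebesgue (\<Union>\<E>) = measure lebesgue (\<Union>c\<in>F. cball (ctr c) (5 * rad c))"
      using F by simp
    also have "\<dots> \<le> (\<Sum>c\<in>F. measure lebesgue (cball (ctr c) (5 * rad c)))"
      by (rule measure_UNION_le) (use F in auto)
    also have "\<dots> = (\<Sum>c\<in>F. 5 * (snd c - fst c))"
    proof (rule sum.cong)
      fix c assume "c \<in> F"
      then have "rad c \<ge> 0" using rK[OF FK] by fastforce
      then show "measure lebesgue (cball (ctr c) (5 * rad c)) = 5 * (snd c - fst c)"
        by (subst measure_cball_real) (auto simp: rad_def)
    qed simp
    also have "\<dots> \<le> (\<Sum>c\<in>F. 5 * ((\<phi> (snd c) - \<phi> (fst c)) / \<epsilon>))"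
    proof (rule sum_mono)
      fix c assume "c \<in> F"
      then have "\<epsilon> * (snd c - fst c) < \<phi> (snd c) - \<phi> (fst c)" using FK unfolding K_def by auto
      then show "5 * (snd c - fst c) \<le> 5 * ((\<phi> (snd c) - \<phi> (fst c)) / \<epsilon>)"
        using eps by (simp add: field_simps)
    qed
    also have "\<dots> = 5 / \<epsilon> * (\<Sum>c\<in>F. \<phi> (snd c) - \<phi> (fst c))"
      by (simp add: sum_distrib_left field_simps)
    also have "\<dots> \<le> 5 / \<epsilon> * (\<phi> q - \<phi> p)"
    proof (rule mult_left_mono)
      have disj: "{fst c..snd c} \<inter> {fst c'..snd c'} = {}" if "c \<in> F" "c' \<in> F" "c \<noteq> c'" for c c'
        using C(3) F(1) that unfolding pairwise_def disjnt_def cb by blast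
      show "(\<Sum>c\<in>F. \<phi> (snd c) - \<phi> (fst c)) \<le> \<phi> q - \<phi> p"
      proof -
        have "\<forall>q'. p \<le> q' \<longrightarrow> q' \<le> q \<longrightarrow> (\<forall>c\<in>F. p \<le> fst c \<and> fst c \<le> snd c \<and> snd c \<le> q')
           \<longrightarrow> (\<Sum>c\<in>F. \<phi> (snd c) - \<phi> (fst c)) \<le> \<phi> q' - \<phi> p"
          by (rule disjoint_incr_sum[where \<phi>=\<phi> and p=p and qmax=q]) (use F(2) mono disj in auto)
        moreover have "\<forall>c\<in>F. p \<le> fst c \<and> fst c \<le> snd c \<and> snd c \<le> q" using FK unfolding K_def by (auto simp: less_imp_le)
        ultimately show ?thesis using pq by blast
      qed
    qed (use eps in simp)
    finally show ?thesis by simp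
  qed
  have "T \<in> lmeasurable" unfolding T_def
    by (rule fmeasurable_Union_bound[OF _ _ bound]) (use C in auto)
  moreover have "measure lebesgue T \<le> 5 * (\<phi> q - \<phi> p) / \<epsilon>" unfolding T_def
    by (rule measure_Union_bound[OF _ _ bound]) (use C in auto)
  moreover have "S \<subseteq> T" using C unfolding T_def by auto
  ultimately show ?thesis by blast
qed


lemma interval_locate:
  "sorted xs \<Longrightarrow> xs \<noteq> [] \<Longrightarrow> hd xs \<le> t \<Longrightarrow> t \<le> last xs \<Longrightarrow> t \<notin> set xs \<Longrightarrow>
   \<exists>i. Suc i < length xs \<and> xs ! i < (t::real) \<and> t < xs ! Suc i"
proof (induction xs)
  case (Cons x xs)
  then have xt: "x < t" by (cases "x = t") auto
  show ?case
  proof (cases xs)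
    case Nil
    then show ?thesis using Cons.prems by simp
  next
    case (Cons y ys)
    show ?thesis
    proof (cases "t < y")
      case True
      then show ?thesis using xt Cons by (intro exI[of _ 0]) auto
    next
      case False
      then have "\<exists>i. Suc i < length xs \<and> xs ! i < t \<and> t < xs ! Suc i"
        using Cons.IH Cons.prems Cons by auto
      then obtain i where "Suc i < length xs \<and> xs ! i < t \<and> t < xs ! Suc i" by blast
      then show ?thesis by (intro exI[of _ "Suc i"]) auto
    qed
  qed
qed simp

definition badset :: "(real \<Rightarrow> 'a::metric_space) \<Rightarrow> real \<Rightarrow> real \<Rightarrow> real set" where
  "badset \<sigma> lL \<epsilon> = {t\<in>{0<..<1}. \<forall>\<delta>>0. \<exists>s\<in>{0..1}. 0 < dist s t \<and> dist s t < \<delta> \<and>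
      dist (\<sigma> s) (\<sigma> t) < (lL - \<epsilon>) * dist s t}"

lemma bad_negligible:
  fixes \<sigma> :: "real \<Rightarrow> 'a::metric_space"
  assumes pos: "lL > 0"
    and lip: "\<And>u v. u \<in> {0..1} \<Longrightarrow> v \<in> {0..1} \<Longrightarrow> dist (\<sigma> u) (\<sigma> v) \<le> lL * dist u v"
    and approx: "\<And>\<eta>. \<eta> > 0 \<Longrightarrow> \<exists>us\<in>parts 0 1. hd us = 0 \<and> last us = 1 \<and> cs \<sigma> us > lL - \<eta>"
    and eps: "\<epsilon> > 0"
  shows "negligible (badset \<sigma> lL \<epsilon>)"
  unfolding negligible_outer_le
proof (intro allI impI)
  fix e :: real assume e: "e > 0"
  define B where "B = badset \<sigma> lL \<epsilon>"
  obtain us where us: "us \<in> parts 0 1" "hd us = 0" "last us = 1" "cs \<sigma> us > lL - e * \<epsilon> / 5"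
    using approx[of "e * \<epsilon> / 5"] e eps by auto
  define n where "n = length us - 1"
  have sus: "sorted us" "us \<noteq> []" "set us \<subseteq> {0..1}" using us(1) unfolding parts_def by auto
  have len: "length us = Suc n" using sus unfolding n_def by simp
  define p where "p i = us ! i" for i
  define q where "q i = us ! Suc i" for i
  define \<phi> where "\<phi> i u = lL * u - dist (\<sigma> u) (\<sigma> (p i))" for i u
  have pq01: "0 \<le> p i" "p i \<le> q i" "q i \<le> 1" if "i < n" for i
    using sus that len unfolding p_def q_def by (auto simp: sorted_iff_nth_mono subset_iff)
  have \<phi>mono: "\<phi> i x \<le> \<phi> i y" if "x \<in> {0..1}" "y \<in> {0..1}" "x \<le> y" "i < n" for i x y
  proof -
    have "dist (\<sigma> y) (\<sigma> (p i)) \<le> dist (\<sigma> x) (\<sigma> (p i)) + dist (\<sigma> x) (\<sigma> y)"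
      by (metis add.commute dist_commute dist_triangle)
    moreover have "dist (\<sigma> x) (\<sigma> y) \<le> lL * (y - x)" using lip[of x y] that by (simp add: dist_real_def)
    ultimately show ?thesis unfolding \<phi>_def by (simp add: algebra_simps)
  qed
  have "\<forall>i\<in>{..<n}. \<exists>T. B \<inter> {p i<..<q i} \<subseteq> T \<and> T \<in> lmeasurable \<and>
          measure lebesgue T \<le> 5 * (\<phi> i (q i) - \<phi> i (p i)) / \<epsilon>"
  proof
    fix i assume i: "i \<in> {..<n}"
    show "\<exists>T. B \<inter> {p i<..<q i} \<subseteq> T \<and> T \<in> lmeasurable \<and>
          measure lebesgue T \<le> 5 * (\<phi> i (q i) - \<phi> i (p i)) / \<epsilon>"
    proof (rule cover_incr[where \<phi>="\<phi> i" and p="p i" and q="q i"])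
      show "\<phi> i x \<le> \<phi> i y" if "p i \<le> x" "x \<le> y" "y \<le> q i" for x y
        using pq01[of i] i that by (intro \<phi>mono) auto
      show "p i \<le> q i" using pq01 i by auto
      show "\<epsilon> > 0" by (rule eps)
      fix t assume t: "t \<in> B \<inter> {p i<..<q i}"
      then obtain s where s: "s \<in> {0..1}" "0 < dist s t" "dist s t < min (t - p i) (q i - t)"
        "dist (\<sigma> s) (\<sigma> t) < (lL - \<epsilon>) * dist s t"
        unfolding B_def badset_def by (auto dest!: spec[of _ "min (t - p i) (q i - t)"])
      define l where "l = min s t"
      define r where "r = max s t"
      have lr: "p i < l" "l < r" "r < q i" "l \<le> t" "t \<le> r" "r - l = dist s t"
        using s t unfolding l_def r_def by (auto simp: dist_real_def)
      have lr01: "l \<in> {0..1}" "r \<in> {0..1}" using lr pq01[of i] i by auto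
      have dlr: "dist (\<sigma> l) (\<sigma> r) = dist (\<sigma> s) (\<sigma> t)"
        unfolding l_def r_def by (cases "s \<le> t") (auto simp: dist_commute)
      have "dist (\<sigma> r) (\<sigma> (p i)) \<le> dist (\<sigma> l) (\<sigma> (p i)) + dist (\<sigma> l) (\<sigma> r)"
        by (metis add.commute dist_commute dist_triangle)
      then have "\<phi> i r - \<phi> i l \<ge> lL * (r - l) - dist (\<sigma> l) (\<sigma> r)" unfolding \<phi>_def by (simp add: algebra_simps)
      moreover have "dist (\<sigma> l) (\<sigma> r) < (lL - \<epsilon>) * (r - l)" using dlr s lr by simp
      ultimately have "\<epsilon> * (r - l) < \<phi> i r - \<phi> i l" by (simp add: algebra_simps)
      then show "\<exists>l r. p i \<le> l \<and> l < r \<and> r \<le> q i \<and> l \<le> t \<and> t \<le> r \<and> \<epsilon> * (r - l) < \<phi> i r - \<phi> i l"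
        using lr by (intro exI[of _ l] exI[of _ r]) auto
    qed
  qed
  then obtain T where T: "\<And>i. i < n \<Longrightarrow> B \<inter> {p i<..<q i} \<subseteq> T i \<and> T i \<in> lmeasurable \<and>
          measure lebesgue (T i) \<le> 5 * (\<phi> i (q i) - \<phi> i (p i)) / \<epsilon>"
    by (metis lessThan_iff)
  define U where "U = (\<Union>i<n. T i) \<union> set us"
  have Um: "(\<Union>i<n. T i) \<in> lmeasurable" using T by (intro fmeasurable.finite_UN) auto
  have sm: "set us \<in> lmeasurable" by (intro negligible_imp_measurable negligible_finite) simp
  have "B \<subseteq> U"
  proof
    fix t assume t: "t \<in> B"
    show "t \<in> U"
    proof (cases "t \<in> set us")
      case False
      have "t \<in> {0<..<1}" using t unfolding B_def badset_def by auto
      then obtain i where i: "Suc i < length us" "us ! i < t" "t < us ! Suc i"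
        using interval_locate[OF sus(1,2), of t] False us(2,3) by auto
      then have "t \<in> T i" using T[of i] t len unfolding p_def q_def by auto
      then show ?thesis using i len unfolding U_def by auto
    qed (auto simp: U_def)
  qed
  moreover have "U \<in> lmeasurable" unfolding U_def using Um sm by auto
  moreover have "measure lebesgue U \<le> e"
  proof -
    have "measure lebesgue U \<le> measure lebesgue (\<Union>i<n. T i) + measure lebesgue (set us)"
      unfolding U_def using Um sm by (intro measure_Un_le) auto
    also have "measure lebesgue (set us) = 0" by (intro negligible_imp_measure0 negligible_finite) simp
    also have "measure lebesgue (\<Union>i<n. T i) \<le> (\<Sum>i<n. measure lebesgue (T i))"
      using T by (intro measure_UNION_le) auto
    also have "\<dots> \<le> (\<Sum>i<n. 5 * (\<phi> i (q i) - \<phi> i (p i)) / \<epsilon>)"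
      using T by (intro sum_mono) auto
    also have "\<dots> = 5 / \<epsilon> * (\<Sum>i<n. lL * (us ! Suc i - us ! i) - dist (\<sigma> (us ! i)) (\<sigma> (us ! Suc i)))"
      unfolding \<phi>_def p_def q_def by (simp add: sum_distrib_left dist_commute field_simps)
    also have "(\<Sum>i<n. lL * (us ! Suc i - us ! i) - dist (\<sigma> (us ! i)) (\<sigma> (us ! Suc i)))
        = lL * (us ! n - us ! 0) - cs \<sigma> us"
    proof -
      have "(\<Sum>i<n. lL * (us ! Suc i - us ! i) - dist (\<sigma> (us ! i)) (\<sigma> (us ! Suc i)))
          = lL * (\<Sum>i<n. us ! Suc i - us ! i) - (\<Sum>i<n. dist (\<sigma> (us ! i)) (\<sigma> (us ! Suc i)))"
      proof -
        have A: "(\<Sum>i<n. lL * (us ! Suc i - us ! i) - dist (\<sigma> (us ! i)) (\<sigma> (us ! Suc i)))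
          = (\<Sum>i<n. lL * (us ! Suc i - us ! i)) - (\<Sum>i<n. dist (\<sigma> (us ! i)) (\<sigma> (us ! Suc i)))"
          by (rule sum_subtractf)
        have B: "(\<Sum>i<n. lL * (us ! Suc i - us ! i)) = lL * (\<Sum>i<n. us ! Suc i - us ! i)"
          by (rule sum_distrib_left[symmetric])
        show ?thesis using A B by linarith
      qed
      also have "(\<Sum>i<n. us ! Suc i - us ! i) = us ! n - us ! 0" by (rule sum_lessThan_telescope)
      also have "(\<Sum>i<n. dist (\<sigma> (us ! i)) (\<sigma> (us ! Suc i))) = cs \<sigma> us" unfolding cs_sum n_def by simp
      finally show ?thesis .
    qed
    finally have M: "measure lebesgue U \<le> 5 / \<epsilon> * (lL * (us ! n - us ! 0) - cs \<sigma> us)" by simp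
    have n1: "us ! n = 1" using us(3) sus(2) last_conv_nth[of us] len by simp
    have n0: "us ! 0 = 0" using us(2) sus(2) hd_conv_nth[of us] by simp
    have "5 / \<epsilon> * (lL * (us ! n - us ! 0) - cs \<sigma> us) \<le> 5 / \<epsilon> * (e * \<epsilon> / 5)"
      using us(4) eps n1 n0 by (intro mult_left_mono) auto
    also have "\<dots> = e" using eps by simp
    finally show ?thesis using M by linarith
  qed
  ultimately show "\<exists>T. badset \<sigma> lL \<epsilon> \<subseteq> T \<and> T \<in> lmeasurable \<and> measure lebesgue T \<le> e"
    unfolding B_def by blast
qed


lemma const_speed_core:
  fixes \<sigma> :: "real \<Rightarrow> 'a::metric_space"
  assumes pos: "lL > 0"
    and lip: "\<And>u v. u \<in> {0..1} \<Longrightarrow> v \<in> {0..1} \<Longrightarrow> dist (\<sigma> u) (\<sigma> v) \<le> lL * dist u v"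
    and approx: "\<And>\<eta>. \<eta> > 0 \<Longrightarrow> \<exists>us\<in>parts 0 1. hd us = 0 \<and> last us = 1 \<and> cs \<sigma> us > lL - \<eta>"
  shows "AE t in lebesgue_on {0..1}. ((\<lambda>s. dist (\<sigma> s) (\<sigma> t) / \<bar>s - t\<bar>) \<longlongrightarrow> lL) (at t within {0..1})"
proof -
  define N where "N = (\<Union>n. badset \<sigma> lL (1 / Suc n)) \<union> {0, 1}"
  have "negligible (\<Union>n. badset \<sigma> lL (1 / Suc n))"
    by (rule negligible_countable_Union) (auto intro!: bad_negligible[OF pos lip approx])
  then have negN: "negligible N" unfolding N_def by auto
  have good: "((\<lambda>s. dist (\<sigma> s) (\<sigma> t) / \<bar>s - t\<bar>) \<longlongrightarrow> lL) (at t within {0..1})"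
    if t: "t \<in> {0..1}" "t \<notin> N" for t
    unfolding Lim_within
  proof (intro allI impI)
    fix e :: real assume e: "e > 0"
    obtain n :: nat where n: "1 / Suc n < e"
      using reals_Archimedean[OF e] by (auto simp: inverse_eq_divide)
    have t01: "t \<in> {0<..<1}" using t unfolding N_def by auto
    have "t \<notin> badset \<sigma> lL (1 / Suc n)" using t unfolding N_def by auto
    then obtain \<delta> where \<delta>: "\<delta> > 0" "\<And>s. s \<in> {0..1} \<Longrightarrow> 0 < dist s t \<Longrightarrow> dist s t < \<delta> \<Longrightarrow>
        \<not> dist (\<sigma> s) (\<sigma> t) < (lL - 1 / Suc n) * dist s t"
      using t01 unfolding badset_def by blast
    show "\<exists>d>0. \<forall>s\<in>{0..1}. 0 < dist s t \<and> dist s t < d \<longrightarrow>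
        dist (dist (\<sigma> s) (\<sigma> t) / \<bar>s - t\<bar>) lL < e"
    proof (intro exI[of _ \<delta>] conjI ballI impI)
      fix s assume s: "s \<in> {0..1}" "0 < dist s t \<and> dist s t < \<delta>"
      have d: "dist s t = \<bar>s - t\<bar>" by (simp add: dist_real_def)
      have up: "dist (\<sigma> s) (\<sigma> t) \<le> lL * \<bar>s - t\<bar>" using lip[OF s(1) t(1)] d by simp
      have lo: "(lL - 1 / Suc n) * \<bar>s - t\<bar> \<le> dist (\<sigma> s) (\<sigma> t)" using \<delta>(2)[OF s(1)] s(2) d by simp
      have pos': "\<bar>s - t\<bar> > 0" using s(2) d by simp
      have "dist (\<sigma> s) (\<sigma> t) / \<bar>s - t\<bar> \<le> lL" using up pos' by (simp add: divide_le_eq)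
      moreover have "lL - 1 / Suc n \<le> dist (\<sigma> s) (\<sigma> t) / \<bar>s - t\<bar>" using lo pos' by (simp add: le_divide_eq)
      ultimately show "dist (dist (\<sigma> s) (\<sigma> t) / \<bar>s - t\<bar>) lL < e" using n by (simp add: dist_real_def)
    qed (rule \<delta>(1))
  qed
  show ?thesis
  proof (rule AE_I'[where N="N \<inter> {0..1}"])
    show "N \<inter> {0..1} \<in> null_sets (lebesgue_on {0..1})"
    proof (subst null_sets_restrict_space)
      have "negligible (N \<inter> {0..1})" using negN by (rule negligible_subset) auto
      then show "N \<inter> {0..1} \<subseteq> {0..1} \<and> N \<inter> {0..1} \<in> null_sets lebesgue"
        by (auto simp: negligible_iff_null_sets)
    qed auto
    show "{t \<in> space (lebesgue_on {0..1}). \<not> ((\<lambda>s. dist (\<sigma> s) (\<sigma> t) / \<bar>s - t\<bar>) \<longlongrightarrow> lL) (at t within {0..1})}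
        \<subseteq> N \<inter> {0..1}"
      using good by auto
  qed
qed



lemma sets_rX:
  fixes X :: "'a::metric_space set"
  assumes "closed X"
  shows "A \<in> sets (restrict_space borel X) \<longleftrightarrow> A \<subseteq> X \<and> A \<in> sets borel"
  using assms by (intro sets_restrict_space_iff) auto

lemma supp_full:
  fixes \<nu> :: "'a::metric_space measure"
  assumes nu: "\<nu> \<in> prob_measures X" and X: "compact X" and K: "closed K" and supp: "msupp \<nu> \<subseteq> K"
  shows "AE x in \<nu>. x \<in> K"
proof -
  have sp: "space \<nu> = X" and st: "sets \<nu> = sets (restrict_space borel X)"
    using nu unfolding prob_measures_def by auto
  have cX: "closed X" using X by (rule compact_imp_closed)
  define C where "C n = X - (\<Union>y\<in>K. ball y (1 / Suc n))" for n :: nat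
  have Cnull: "C n \<in> null_sets \<nu>" for n
  proof -
    let ?T = "{U. open U \<and> emeasure \<nu> (U \<inter> X) = 0}"
    have "C n \<subseteq> \<Union>?T"
    proof
      fix x assume x: "x \<in> C n"
      then have xX: "x \<in> X" and xK: "x \<notin> K" unfolding C_def by auto
      then have "x \<notin> msupp \<nu>" using supp by auto
      then obtain U where "open U" "x \<in> U" "\<not> emeasure \<nu> (U \<inter> space \<nu>) > 0"
        using xX sp unfolding msupp_def by auto
      then show "x \<in> \<Union>?T" using sp by (auto simp: zero_less_iff_neq_zero)
    qed
    moreover have "compact (C n)" unfolding C_def using X by (intro compact_diff) auto
    ultimately obtain T' where T': "T' \<subseteq> ?T" "finite T'" "C n \<subseteq> \<Union>T'"
      by (metis (no_types, lifting) compactE mem_Collect_eq)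
    have "(\<Union>U\<in>T'. U \<inter> X) \<in> null_sets \<nu>"
    proof (rule null_sets_UN')
      show "countable T'" using T'(2) by (rule countable_finite)
      fix U assume "U \<in> T'"
      then have "open U" "emeasure \<nu> (U \<inter> X) = 0" using T' by auto
      moreover have "U \<inter> X \<in> sets \<nu>" unfolding st sets_rX[OF cX] using \<open>open U\<close> cX by (auto intro!: sets.Int borel_open borel_closed)
      ultimately show "U \<inter> X \<in> null_sets \<nu>" by auto
    qed
    moreover have "C n \<in> sets \<nu>" unfolding st sets_rX[OF cX] C_def
      by (auto intro!: borel_closed closed_Diff cX)
    moreover have "C n \<subseteq> (\<Union>U\<in>T'. U \<inter> X)" using T'(3) unfolding C_def by auto
    ultimately show ?thesis by (rule null_sets_subset)
  qed
  have "{x \<in> space \<nu>. x \<notin> K} \<subseteq> (\<Union>n. C n)"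
  proof
    fix x assume x: "x \<in> {x \<in> space \<nu>. x \<notin> K}"
    then have "open (- K)" "x \<in> - K" using K by auto
    then obtain e where e: "e > 0" "ball x e \<subseteq> - K" using open_contains_ball by blast
    obtain n :: nat where n: "inverse (Suc n) < e" using reals_Archimedean[OF e(1)] by auto
    have "x \<notin> ball y (1 / Suc n)" if "y \<in> K" for y
    proof
      assume "x \<in> ball y (1 / Suc n)"
      then have "dist x y < e" using n by (simp add: dist_commute inverse_eq_divide)
      then show False using e that by auto
    qed
    then show "x \<in> (\<Union>n. C n)" using x sp unfolding C_def by auto
  qed
  moreover have "(\<Union>n. C n) \<in> null_sets \<nu>" using Cnull by (rule null_sets_UN)
  ultimately show ?thesis by (intro AE_I'[where N="\<Union>n. C n"]) auto
qed


lemma cont_meas: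
  fixes \<sigma> :: "'b::topological_space \<Rightarrow> 'a::metric_space"
  assumes "continuous_on I \<sigma>" "\<sigma> ` I \<subseteq> X" "sets \<omega> = sets (restrict_space borel I)"
  shows "\<sigma> \<in> measurable \<omega> (restrict_space borel X)"
proof -
  have sp: "space \<omega> = I" using sets_eq_imp_space_eq[OF assms(3)] by (simp add: space_restrict_space)
  have "\<sigma> \<in> measurable (restrict_space borel I) borel"
    using borel_measurable_continuous_on_restrict[OF assms(1)] .
  moreover have "measurable \<omega> (borel::'a measure) = measurable (restrict_space borel I) borel"
    by (rule measurable_cong_sets[OF assms(3)]) simp
  ultimately have "\<sigma> \<in> measurable \<omega> borel" by simp
  then show ?thesis using assms(2) sp by (intro measurable_restrict_space2) auto
qed

lemma push_props:
  fixes \<sigma> :: "real \<Rightarrow> 'a::metric_space"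
  assumes X: "compact X" and cont: "continuous_on {0..1} \<sigma>" and img: "\<sigma> ` {0..1} \<subseteq> X"
    and om: "\<omega> \<in> prob_measures {0..1}"
  shows "distr \<omega> (restrict_space borel X) \<sigma> \<in> prob_measures X"
    and "msupp (distr \<omega> (restrict_space borel X) \<sigma>) \<subseteq> \<sigma> ` {0..1}"
proof -
  have ps: "prob_space \<omega>" and st: "sets \<omega> = sets (restrict_space borel {0..1})" and sp: "space \<omega> = {0..1}"
    using om unfolding prob_measures_def by auto
  have cX: "closed X" using X by (rule compact_imp_closed)
  have meas: "\<sigma> \<in> measurable \<omega> (restrict_space borel X)" by (rule cont_meas[OF cont img st])
  let ?\<nu> = "distr \<omega> (restrict_space borel X) \<sigma>"
  show "?\<nu> \<in> prob_measures X"
    unfolding prob_measures_def using prob_space.prob_space_distr[OF ps meas]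
    by (simp add: space_restrict_space)
  show "msupp ?\<nu> \<subseteq> \<sigma> ` {0..1}"
  proof
    fix x assume x: "x \<in> msupp ?\<nu>"
    show "x \<in> \<sigma> ` {0..1}"
    proof (rule ccontr)
      assume nx: "x \<notin> \<sigma> ` {0..1}"
      have "compact (\<sigma> ` {0..1})" by (rule compact_continuous_image[OF cont compact_Icc])
      then have op: "open (- \<sigma> ` {0..1})" by (simp add: compact_imp_closed open_Compl)
      have spn: "space ?\<nu> = X" by (simp add: space_restrict_space)
      have "(- \<sigma> ` {0..1}) \<inter> X \<in> sets (restrict_space borel X)"
        unfolding sets_rX[OF cX] using op cX by (auto intro!: sets.Int borel_open borel_closed)
      then have "emeasure ?\<nu> ((- \<sigma> ` {0..1}) \<inter> X) = emeasure \<omega> (\<sigma> -` ((- \<sigma> ` {0..1}) \<inter> X) \<inter> space \<omega>)"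
        by (rule emeasure_distr[OF meas])
      also have "\<sigma> -` ((- \<sigma> ` {0..1}) \<inter> X) \<inter> space \<omega> = {}" using sp by auto
      finally have "emeasure ?\<nu> ((- \<sigma> ` {0..1}) \<inter> space ?\<nu>) = 0" using spn by simp
      moreover have "emeasure ?\<nu> ((- \<sigma> ` {0..1}) \<inter> space ?\<nu>) > 0"
        using x op nx unfolding msupp_def by auto
      ultimately show False by simp
    qed
  qed
qed


lemma section_exists:
  fixes \<sigma> :: "real \<Rightarrow> 'a::metric_space"
  assumes X: "compact X" and cont: "continuous_on {0..1} \<sigma>" and img: "\<sigma> ` {0..1} \<subseteq> X"
    and nu: "\<nu> \<in> prob_measures X" and supp: "msupp \<nu> \<subseteq> \<sigma> ` {0..1}"
  shows "\<exists>\<omega>\<in>prob_measures {0..1}. distr \<omega> (restrict_space borel X) \<sigma> = \<nu>"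
proof -
  define K where "K = \<sigma> ` {0..1}"
  have cK: "compact K" unfolding K_def by (rule compact_continuous_image[OF cont compact_Icc])
  then have clK: "closed K" by (rule compact_imp_closed)
  have cX: "closed X" using X by (rule compact_imp_closed)
  have ps: "prob_space \<nu>" and st: "sets \<nu> = sets (restrict_space borel X)" and sp: "space \<nu> = X"
    using nu unfolding prob_measures_def by auto
  define r where "r x = (if x \<in> K then Inf {u\<in>{0..1}. \<sigma> u = x} else 0)" for x
  have rK: "r x \<in> {0..1} \<and> \<sigma> (r x) = x \<and> (\<forall>u\<in>{0..1}. \<sigma> u = x \<longrightarrow> r x \<le> u)" if x: "x \<in> K" for x
  proof -
    let ?P = "{u\<in>{0..1}. \<sigma> u = x}"
    have "?P = {0..1} \<inter> \<sigma> -` {x}" by auto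
    then have "closed ?P" using continuous_closed_preimage[OF cont] by simp
    moreover have "?P \<noteq> {}" using x unfolding K_def by auto
    moreover have "bdd_below ?P" by (rule bdd_belowI[of _ 0]) auto
    ultimately have "Inf ?P \<in> ?P" by (intro closed_contains_Inf)
    moreover have "\<forall>u\<in>?P. Inf ?P \<le> u" using \<open>bdd_below ?P\<close> by (auto intro: cInf_lower)
    ultimately show ?thesis unfolding r_def using x by auto
  qed
  have r01: "r x \<in> {0..1}" for x using rK[of x] by (cases "x \<in> K") (auto simp: r_def)
  have rmeas: "r \<in> borel_measurable (restrict_space borel X)"
    unfolding borel_measurable_iff_le
  proof
    fix c :: real
    have eq: "{w \<in> space (restrict_space borel X). r w \<le> c} =
        X \<inter> (\<sigma> ` ({0..1} \<inter> {..c}) \<union> (if 0 \<le> c then - K else {}))"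
    proof (intro equalityI subsetI)
      fix x assume "x \<in> {w \<in> space (restrict_space borel X). r w \<le> c}"
      then have x: "x \<in> X" "r x \<le> c" by (auto simp: space_restrict_space)
      show "x \<in> X \<inter> (\<sigma> ` ({0..1} \<inter> {..c}) \<union> (if 0 \<le> c then - K else {}))"
      proof (cases "x \<in> K")
        case True
        then show ?thesis using rK[OF True] x by (intro IntI UnI1 image_eqI[of _ _ "r x"]) auto
      next
        case False
        then show ?thesis using x by (auto simp: r_def)
      qed
    next
      fix x assume x: "x \<in> X \<inter> (\<sigma> ` ({0..1} \<inter> {..c}) \<union> (if 0 \<le> c then - K else {}))"
      show "x \<in> {w \<in> space (restrict_space borel X). r w \<le> c}"
      proof (cases "x \<in> K")
        case True
        then obtain u where "u \<in> {0..1}" "u \<le> c" "\<sigma> u = x" using x by (auto split: if_splits)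
        then have "r x \<le> c" using rK[OF True] by force
        then show ?thesis using x by (auto simp: space_restrict_space)
      next
        case False
        then have "0 \<le> c" using x unfolding K_def by (auto split: if_splits)
        then show ?thesis using x False by (auto simp: space_restrict_space r_def)
      qed
    qed
    have "compact (\<sigma> ` ({0..1} \<inter> {..c}))"
      by (intro compact_continuous_image continuous_on_subset[OF cont] compact_Int_closed) auto
    then have "\<sigma> ` ({0..1} \<inter> {..c}) \<in> sets borel" by (intro borel_closed compact_imp_closed)
    moreover have "(if 0 \<le> c then - K else {}) \<in> sets borel" using clK by (auto intro: borel_open)
    ultimately show "{w \<in> space (restrict_space borel X). r w \<le> c} \<in> sets (restrict_space borel X)"
      unfolding eq sets_rX[OF cX] using cX by (auto intro!: sets.Int sets.Un borel_closed)
  qed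
  have rm: "r \<in> measurable \<nu> (restrict_space borel {0..1})"
  proof (rule measurable_restrict_space2)
    show "r \<in> space \<nu> \<rightarrow> {0..1}" using r01 by auto
    have "measurable \<nu> (borel::real measure) = measurable (restrict_space borel X) borel"
      by (rule measurable_cong_sets[OF st]) simp
    then show "r \<in> borel_measurable \<nu>" using rmeas by simp
  qed
  define \<omega> where "\<omega> = distr \<nu> (restrict_space borel {0..1}) r"
  have om: "\<omega> \<in> prob_measures {0..1}"
    unfolding prob_measures_def \<omega>_def using prob_space.prob_space_distr[OF ps rm]
    by (simp add: space_restrict_space)
  have \<sigma>m: "\<sigma> \<in> measurable (restrict_space borel {0..1}) (restrict_space borel X)"
    by (rule cont_meas[OF cont img]) simp
  have comp: "\<sigma> \<circ> r \<in> measurable \<nu> (restrict_space borel X)" by (rule measurable_comp[OF rm \<sigma>m])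
  have AEK: "AE x in \<nu>. x \<in> K" by (rule supp_full[OF nu X clK]) (use supp K_def in simp)
  have "distr \<omega> (restrict_space borel X) \<sigma> = distr \<nu> (restrict_space borel X) (\<sigma> \<circ> r)"
    unfolding \<omega>_def by (rule distr_distr[OF \<sigma>m rm])
  also have "\<dots> = \<nu>"
  proof (rule measure_eqI)
    show "sets (distr \<nu> (restrict_space borel X) (\<sigma> \<circ> r)) = sets \<nu>" using st by simp
    fix A assume A: "A \<in> sets (distr \<nu> (restrict_space borel X) (\<sigma> \<circ> r))"
    then have A': "A \<in> sets (restrict_space borel X)" by simp
    have "emeasure (distr \<nu> (restrict_space borel X) (\<sigma> \<circ> r)) A = emeasure \<nu> ((\<sigma> \<circ> r) -` A \<inter> space \<nu>)"
      by (rule emeasure_distr[OF comp A'])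
    also have "\<dots> = emeasure \<nu> A"
    proof (rule emeasure_eq_AE)
      show "AE x in \<nu>. (x \<in> (\<sigma> \<circ> r) -` A \<inter> space \<nu>) = (x \<in> A)"
        using AEK
      proof (rule eventually_mono)
        fix x assume x: "x \<in> K"
        then have "x \<in> space \<nu>" using img sp unfolding K_def by auto
        then show "(x \<in> (\<sigma> \<circ> r) -` A \<inter> space \<nu>) = (x \<in> A)" using rK[OF x] by auto
      qed
      show "(\<sigma> \<circ> r) -` A \<inter> space \<nu> \<in> sets \<nu>" using comp A' by (rule measurable_sets)
      show "A \<in> sets \<nu>" using A' st by simp
    qed
    finally show "emeasure (distr \<nu> (restrict_space borel X) (\<sigma> \<circ> r)) A = emeasure \<nu> A" .
  qed
  finally show ?thesis using om by blast
qed



lemma cl_lip_const: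
  fixes \<gamma> :: "real \<Rightarrow> 'a::metric_space"
  assumes L: "C-lipschitz_on {0..1} \<gamma>"
  shows "curve_length \<gamma> 0 1 \<le> ereal (lip_const \<gamma>)"
proof -
  let ?S = "{C. C-lipschitz_on {0..1} \<gamma>}"
  have b: "finlen \<gamma> 0 1 \<and> Lr \<gamma> 0 1 \<le> C'" if "C' \<in> ?S" for C'
    by (rule Lr_le) (use cs_lipschitz[of C' 0 1 \<gamma>] that in auto)
  have fin: "finlen \<gamma> 0 1" using b[of C] L by auto
  have "Lr \<gamma> 0 1 \<le> Inf ?S"
  proof (rule cInf_greatest)
    show "?S \<noteq> {}" using L by blast
    fix x assume "x \<in> ?S" then show "Lr \<gamma> 0 1 \<le> x" using b by blast
  qed
  then show ?thesis using Lr_eq[OF fin] unfolding lip_const_def by simp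
qed

lemma reparam_exists:
  fixes g :: "real \<Rightarrow> 'a::metric_space"
  assumes g: "continuous_on {a..b} g" and fin: "finlen g a b"
  shows "\<exists>\<sigma>. \<sigma> ` {0..1} = g ` {a..b} \<and> \<sigma> 0 = g a \<and> \<sigma> 1 = g b \<and>
             (Lr g a b)-lipschitz_on {0..1} \<sigma> \<and> constant_speed \<sigma>"
proof (cases "Lr g a b = 0")
  case True
  have ab: "a \<le> b" using fin unfolding finlen_def by simp
  have const: "g t = g a" if t: "t \<in> {a..b}" for t
  proof -
    have 1: "dist (g a) (g t) \<le> Lr g a t - Lr g a a" by (rule arc_dist[OF fin]) (use t in auto)
    have 2: "Lr g a t \<le> Lr g a b" by (rule arc_mono[OF fin]) (use t in auto)
    have "dist (g a) (g t) \<le> 0" using 1 2 True Lr_refl[of g a] by linarith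
    then show ?thesis by simp
  qed
  let ?\<sigma> = "\<lambda>_::real. g a"
  have i1: "?\<sigma> ` {0..1} = {g a}" by (rule image_constant[of 0]) simp
  have "g ` {a..b} \<subseteq> {g a}" using const by blast
  moreover have "g a \<in> g ` {a..b}" using ab by simp
  ultimately have "g ` {a..b} = {g a}" by blast
  then have im: "?\<sigma> ` {0..1} = g ` {a..b}" using i1 by simp
  have lip: "(Lr g a b)-lipschitz_on {0..1} ?\<sigma>" unfolding True by (intro lipschitz_onI) simp_all
  have cs: "constant_speed ?\<sigma>" unfolding constant_speed_def
    by (intro exI[of _ 0]) simp
  have gb: "g b = g a" using const[of b] ab by simp
  show ?thesis using im lip cs gb by (intro exI[of _ ?\<sigma>]) simp
next
  case False
  then have pos: "Lr g a b > 0" using Lr_nonneg[OF fin] by simp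
  let ?\<sigma> = "reparam g a b"
  note P = reparam_props[OF g fin pos]
  have lip: "(Lr g a b)-lipschitz_on {0..1} ?\<sigma>" using P(4) pos by (intro lipschitz_onI) auto
  have "constant_speed ?\<sigma>" unfolding constant_speed_def
    using const_speed_core[OF pos P(4) P(8)] by (intro exI[of _ "Lr g a b"])
  then show ?thesis using P(5,6,7) lip by (intro exI[of _ ?\<sigma>]) simp
qed


theorem lemma1:
  fixes X :: "'a::metric_space set" and L :: real
  assumes "compact X" and "L \<ge> 0"
  shows "P_curve X L =
    {distr \<omega> (restrict_space borel X) \<gamma> | \<gamma> \<omega>.
       \<gamma> \<in> Lip_loops X \<and> constant_speed \<gamma> \<and> lip_const \<gamma> \<le> L \<and> \<omega> \<in> prob_measures {0..1}}"
proof (intro equalityI subsetI)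
  fix \<nu> assume "\<nu> \<in> P_curve X L"
  then obtain g a b where nu: "\<nu> \<in> prob_measures X" and cc: "closed_curve_in X g a b"
    and len: "curve_length g a b \<le> ereal L" and supp: "msupp \<nu> \<subseteq> g ` {a..b}"
    unfolding P_curve_def by blast
  have ab: "a \<le> b" and gc: "continuous_on {a..b} g" and gX: "g ` {a..b} \<subseteq> X" and gab: "g a = g b"
    using cc unfolding closed_curve_in_def by auto
  have fin: "finlen g a b" unfolding finlen_def using ab len by (auto simp: le_less_trans)
  have lL: "Lr g a b \<le> L" using Lr_eq[OF fin] len by simp
  obtain \<sigma> where \<sigma>: "\<sigma> ` {0..1} = g ` {a..b}" "\<sigma> 0 = g a" "\<sigma> 1 = g b"
      "(Lr g a b)-lipschitz_on {0..1} \<sigma>" "constant_speed \<sigma>"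
    using reparam_exists[OF gc fin] by blast
  have lc: "lip_const \<sigma> \<le> L"
  proof -
    have "lip_const \<sigma> \<le> Lr g a b" unfolding lip_const_def
      by (rule cInf_lower) (use \<sigma>(4) in \<open>auto intro!: bdd_belowI[of _ 0] dest: lipschitz_on_nonneg\<close>)
    then show ?thesis using lL by simp
  qed
  have Lip: "\<sigma> \<in> Lip_loops X" unfolding Lip_loops_def using \<sigma> gX gab by auto
  have cont: "continuous_on {0..1} \<sigma>" by (rule lipschitz_on_continuous_on[OF \<sigma>(4)])
  obtain \<omega> where \<omega>: "\<omega> \<in> prob_measures {0..1}" "distr \<omega> (restrict_space borel X) \<sigma> = \<nu>"
    using section_exists[OF assms(1) cont _ nu] \<sigma>(1) gX supp by auto
  show "\<nu> \<in> {distr \<omega> (restrict_space borel X) \<gamma> | \<gamma> \<omega>.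
       \<gamma> \<in> Lip_loops X \<and> constant_speed \<gamma> \<and> lip_const \<gamma> \<le> L \<and> \<omega> \<in> prob_measures {0..1}}"
    using \<omega> Lip \<sigma>(5) lc by blast
next
  fix \<nu> assume "\<nu> \<in> {distr \<omega> (restrict_space borel X) \<gamma> | \<gamma> \<omega>.
       \<gamma> \<in> Lip_loops X \<and> constant_speed \<gamma> \<and> lip_const \<gamma> \<le> L \<and> \<omega> \<in> prob_measures {0..1}}"
  then obtain \<gamma> \<omega> where nu: "\<nu> = distr \<omega> (restrict_space borel X) \<gamma>" and g: "\<gamma> \<in> Lip_loops X"
    and lc: "lip_const \<gamma> \<le> L" and om: "\<omega> \<in> prob_measures {0..1}" by blast
  obtain C where C: "C-lipschitz_on {0..1} \<gamma>" and gX: "\<gamma> ` {0..1} \<subseteq> X" and g01: "\<gamma> 0 = \<gamma> 1"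
    using g unfolding Lip_loops_def by blast
  have cont: "continuous_on {0..1} \<gamma>" by (rule lipschitz_on_continuous_on[OF C])
  have "closed_curve_in X \<gamma> 0 1" unfolding closed_curve_in_def using cont gX g01 by auto
  moreover have "curve_length \<gamma> 0 1 \<le> ereal L" using cl_lip_const[OF C] lc by (simp add: order_trans)
  moreover note push_props[OF assms(1) cont gX om]
  ultimately show "\<nu> \<in> P_curve X L" unfolding P_curve_def nu by blast
qed


end
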